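(* Let $q\ge2$, $k>0$, and $p\ge q+k+1$, and let $V(x)=\frac{x^p}{p}-\frac{x^q}{q}$ for $x\ge0$, so $V'(x)=x^{p-1}-x^{q-1}$. Let $c\in(0,1)$ be the unique solution in $(0,1)$ of $x^{q+k}-x^{q-1}=k(x-1)$. Then $(x-1)V'(x)\ge k(x-1)^2$ for all $x\in[c,\infty)$. *)

theory Defs
  imports Complex_Main
begin

definition V :: "real \<Rightarrow> real \<Rightarrow> real \<Rightarrow> real" where
  "V p q x = x powr p / p - x powr q / q"

definition V' :: "real \<Rightarrow> real \<Rightarrow> real \<Rightarrow> real" where
  "V' p q x = x powr (p - 1) - x powr (q - 1)"

end

theory Submission
  imports Defs "HOL-Analysis.Analysis"
begin

lemma tangent_powr:
  fixes a x y :: real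
  assumes "a \<ge> 1" "x > 0" "y > 0"
  shows "a * x powr (a - 1) * (y - x) \<le> y powr a - x powr a"
proof -
  have "(\<lambda>t. a * t powr (a - 1)) x * (y - x) \<le> (\<lambda>t. t powr a) y - (\<lambda>t. t powr a) x"
  proof (rule f''_imp_f'[where C="{0<..}" and f''="\<lambda>t. a * ((a - 1) * t powr (a - 1 - 1))"])
    show "convex {0::real<..}" by simp
    fix t :: real assume t: "t \<in> {0<..}"
    then show "DERIV (\<lambda>t. t powr a) t :> a * t powr (a - 1)"
      by (auto intro!: derivative_eq_intros)
    show "DERIV (\<lambda>t. a * t powr (a - 1)) t :> a * ((a - 1) * t powr (a - 1 - 1))"
      using t by (auto intro!: derivative_eq_intros)
    show "0 \<le> a * ((a - 1) * t powr (a - 1 - 1))" using assms by simp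
  qed (use assms in auto)
  then show ?thesis by simp
qed

theorem lemma4:
  fixes p q k c :: real
  assumes "q \<ge> 2" and "k > 0" and "p \<ge> q + k + 1"
    and "0 < c" and "c < 1"
    and "c powr (q + k) - c powr (q - 1) = k * (c - 1)"
    and "\<forall>y. 0 < y \<and> y < 1 \<and> y powr (q + k) - y powr (q - 1) = k * (y - 1) \<longrightarrow> y = c"
  shows "\<forall>x \<ge> c. (x - 1) * V' p q x \<ge> k * (x - 1)^2"
proof (intro allI impI)
  fix x assume xc: "x \<ge> c"
  have x0: "x > 0" using xc assms(4) by simp
  define g where "g = (\<lambda>y::real. y powr (q - 1) - y powr (q + k) - k * (1 - y))"
  have gc: "g c = 0" using assms(6) unfolding g_def by (simp add: algebra_simps)
  have gpos: "g y > 0" if "0 < y" "y < 1" "(k / (k+1)) < y powr (q - 1 + k)" for y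
  proof -
    have "(k + 1) * y powr (k + 1 - 1) * (1 - y) \<le> 1 powr (k+1) - y powr (k+1)"
      by (rule tangent_powr) (use that assms(2) in auto)
    hence A: "(k + 1) * y powr k * (1 - y) \<le> 1 - y powr (k+1)" by simp
    have "y powr (q + k) = y powr (q - 1) * y powr (k + 1)"
      using powr_add[of y "q - 1" "k + 1"] by simp
    hence "g y = y powr (q - 1) * (1 - y powr (k+1)) - k * (1 - y)"
      unfolding g_def by (simp add: algebra_simps)
    also have "\<dots> \<ge> y powr (q - 1) * ((k + 1) * y powr k * (1 - y)) - k * (1 - y)"
      using A that by (intro diff_right_mono mult_left_mono) auto
    also have "y powr (q - 1) * ((k + 1) * y powr k * (1 - y)) - k * (1 - y)
        = (1 - y) * ((k+1) * y powr (q - 1 + k) - k)"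
      unfolding powr_add[of y "q - 1" k] by (simp add: algebra_simps)
    finally have "g y \<ge> (1 - y) * ((k+1) * y powr (q - 1 + k) - k)" .
    moreover have "(k+1) * y powr (q - 1 + k) - k > 0"
      using that assms(2) by (simp add: field_simps)
    moreover have "(1 - y) * ((k+1) * y powr (q - 1 + k) - k) > 0"
      using calculation(2) that by (intro mult_pos_pos) auto
    ultimately show ?thesis by linarith
  qed
  have gcont: "continuous_on {a..b} g" if "a > 0" for a b
    unfolding g_def using that by (intro continuous_intros) auto
  have gx: "g x \<ge> 0" if "x < 1"
  proof (rule ccontr)
    assume neg: "\<not> g x \<ge> 0"
    hence xne: "x \<noteq> c" using gc by auto
    define e where "e = q - 1 + k"
    have e0: "e > 0" using assms(1,2) unfolding e_def by simp
    define r where "r = (k / (k+1)) powr (1 / e)"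
    have kk: "0 < k / (k+1)" "k / (k+1) < 1" using assms(2) by auto
    have r0: "r > 0" unfolding r_def using kk assms(2) by simp
    have r1: "r < 1" unfolding r_def
      using powr_less_mono2[of "1 / e" "k / (k+1)" 1] kk e0 by simp
    have rr: "r powr e = k / (k+1)" unfolding r_def using e0 kk assms(2)
      by (simp add: powr_powr)
    define y where "y = (max x r + 1) / 2"
    have y: "x < y" "r < y" "y < 1" unfolding y_def using that r1 by auto
    have "r powr e < y powr e" using y r0 e0 by (simp add: powr_less_mono2)
    hence "g y > 0" using gpos[of y] y r0 rr unfolding e_def by auto
    then obtain z where z: "x \<le> z" "z \<le> y" "g z = 0"
      using IVT'[of g x 0 y] neg gcont[OF x0, of y] y by force
    have "z \<noteq> x" "z \<noteq> y" using z neg \<open>g y > 0\<close> by auto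
    hence "0 < z" "z < 1" "z \<noteq> c" using z y x0 xc xne by auto
    moreover have "z powr (q + k) - z powr (q - 1) = k * (z - 1)"
      using z(3) unfolding g_def by (simp add: algebra_simps)
    ultimately show False using assms(7) by blast
  qed
  show "(x - 1) * V' p q x \<ge> k * (x - 1)^2"
  proof (cases "x < 1")
    case True
    have "x powr (p - 1) \<le> x powr (q + k)"
      using True x0 assms(1-3) by (intro powr_mono') auto
    hence "x powr (q - 1) - x powr (p - 1) \<ge> k * (1 - x)"
      using gx[OF True] unfolding g_def by simp
    hence "(1 - x) * (x powr (q - 1) - x powr (p - 1)) \<ge> (1 - x) * (k * (1 - x))"
      using True by (intro mult_left_mono) auto
    thus ?thesis unfolding V'_def by (simp add: power2_eq_square algebra_simps)
  next
    case False
    have "(p - q) * 1 powr (p - q - 1) * (x - 1) \<le> x powr (p - q) - 1 powr (p - q)"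
      by (rule tangent_powr) (use assms(1-3) x0 in auto)
    hence B: "(p - q) * (x - 1) \<le> x powr (p - q) - 1" by simp
    have "k * (x - 1) \<le> (p - q) * (x - 1)" using False assms(1-3) by (intro mult_right_mono) auto
    also have "\<dots> \<le> x powr (p - q) - 1" by (rule B)
    also have "\<dots> \<le> x powr (q - 1) * (x powr (p - q) - 1)"
    proof -
      have "x powr (q - 1) \<ge> 1" using False assms(1-3) by (intro ge_one_powr_ge_zero) auto
      moreover have "x powr (p - q) - 1 \<ge> 0" using B False assms(1-3) by (smt (verit) mult_nonneg_nonneg)
      ultimately show ?thesis using mult_right_mono[of 1 "x powr (q - 1)" "x powr (p - q) - 1"] by simp
    qed
    also have "\<dots> = x powr (p - 1) - x powr (q - 1)"
    proof -
      have "x powr (p - 1) = x powr (q - 1) * x powr (p - q)"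
        using powr_add[of x "q - 1" "p - q"] by simp
      then show ?thesis by (simp add: algebra_simps)
    qed
    finally have "k * (x - 1) \<le> V' p q x" unfolding V'_def .
    hence "(x - 1) * (k * (x - 1)) \<le> (x - 1) * V' p q x"
      using False by (intro mult_left_mono) auto
    thus ?thesis by (simp add: power2_eq_square algebra_simps)
  qed
qed

end
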